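(* Fix integers $n\ge m\ge 3$ and $d$ with $n+1\le\binom{d+m-2}{m-1}$, and let $s=\lfloor d/2\rfloor$. Let $h_{max}$ be the maximal $h$-vector of Perazzo algebras with these invariants. Then $h_{max}$ is unimodal if and only if both (1) $\gamma_{s-1}<\beta_{s-1}$, and (2) $\alpha_{s-1}+\gamma_{s-1}\le\alpha_s+\beta_s$.
   Context: $K$ algebraically closed of characteristic zero. A Perazzo form of degree $d$ is $F=X_0p_0+\dots+X_np_n+G\in K[X_0,\dots,X_n,U_1,\dots,U_m]_d$ with $p_i\in K[U_1,\dots,U_m]_{d-1}$ algebraically dependent but linearly independent, $G\in K[U_1,\dots,U_m]_d$; $A_F=R/\operatorname{Ann}_RF$ with $R$ the ring of differential operators. $\alpha_i=\binom{m+i-1}{m-1}$, $\beta_i=\binom{d+m-i-1}{m-1}$, $\gamma_i=(n+1)\binom{m+i-2}{m-1}$. The maximal $h$-vector $h_{max}=(h_0,\dots,h_d)$ is symmetric ($h_i=h_{d-i}$) with $h_i=\min\{\alpha_i+\beta_i,\alpha_i+\gamma_i\}$ for $0\le i\le s$. A vector $(h_0,\dots,h_d)$ is unimodal if $h_0\le\dots\le h_k\ge h_{k+1}\ge\dots\ge h_d$ for some $k$. *)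

theory Defs
  imports Main
begin

definition alpha :: "nat \<Rightarrow> nat \<Rightarrow> nat" where
  "alpha m i = (m + i - 1) choose (m - 1)"

definition beta :: "nat \<Rightarrow> nat \<Rightarrow> nat \<Rightarrow> nat" where
  "beta m d i = (d + m - i - 1) choose (m - 1)"

definition gamma :: "nat \<Rightarrow> nat \<Rightarrow> nat \<Rightarrow> nat" where
  "gamma n m i = (n + 1) * ((m + i - 2) choose (m - 1))"

definition hmax :: "nat \<Rightarrow> nat \<Rightarrow> nat \<Rightarrow> nat \<Rightarrow> nat" where
  "hmax n m d i =
     (let f = (\<lambda>j. min (alpha m j + beta m d j) (alpha m j + gamma n m j)) in
      if i \<le> d div 2 then f i else if i \<le> d then f (d - i) else 0)"

definition unimodal :: "(nat \<Rightarrow> nat) \<Rightarrow> nat \<Rightarrow> bool" where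
  "unimodal h d \<longleftrightarrow> (\<exists>k\<le>d. (\<forall>i<k. h i \<le> h (Suc i)) \<and>
                               (\<forall>i. k \<le> i \<and> i < d \<longrightarrow> h (Suc i) \<le> h i))"

end

theory Submission
  imports Defs
begin

lemma choose_top_mono: "a \<le> b \<Longrightarrow> a choose r \<le> b choose (r::nat)"
proof (induction b rule: dec_induct)
  case base then show ?case by simp
next
  case (step b)
  have "b choose r \<le> Suc b choose r"
    by (cases r) auto
  with step show ?case by simp
qed

lemma choose_top_strict: "a < b \<Longrightarrow> 1 \<le> r \<Longrightarrow> r \<le> b \<Longrightarrow> a choose r < b choose (r::nat)"
proof -
  assume h: "a < b" "1 \<le> r" "r \<le> b"
  obtain b' where b: "b = Suc b'" using h by (cases b) auto
  obtain r' where r: "r = Suc r'" using h by (cases r) auto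
  have "a choose r \<le> b' choose r" using h b by (intro choose_top_mono) auto
  moreover have "0 < b' choose r'" using h b r by simp
  moreover have "b choose r = (b' choose r') + (b' choose r)" using b r by simp
  ultimately show ?thesis by linarith
qed

lemma alpha_mono: "alpha m i \<le> alpha m (Suc i)"
  unfolding alpha_def by (intro choose_top_mono) auto

lemma gamma_mono: "i \<le> j \<Longrightarrow> gamma n m i \<le> gamma n m j"
  unfolding gamma_def by (intro mult_le_mono2 choose_top_mono) auto

lemma beta_anti: "i \<le> j \<Longrightarrow> beta m d j \<le> beta m d i"
  unfolding beta_def by (intro choose_top_mono) auto

lemma gamma0: "2 \<le> m \<Longrightarrow> gamma n m 0 = 0"
proof -
  assume "2 \<le> m"
  then have "m + 0 - 2 < m - 1" by arith
  then show ?thesis unfolding gamma_def by (simp only: binomial_eq_0 mult_0_right)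
qed

lemma beta0: "1 \<le> m \<Longrightarrow> 0 < beta m d 0"
  unfolding beta_def by simp

lemma ag_mono: "alpha m i + gamma n m i \<le> alpha m (Suc i) + gamma n m (Suc i)"
  using alpha_mono[of m i] gamma_mono[of i "Suc i" n m] by simp

lemma ab_strict:
  assumes "3 \<le> m" "2 * j + 1 < d"
  shows "alpha m (Suc j) + beta m d (Suc j) < alpha m j + beta m d j"
proof -
  have e1: "m + Suc j - 1 = Suc (m + j - 1)" "m - 1 = Suc (m - 2)" using assms by arith+
  have a: "alpha m (Suc j) = alpha m j + ((m + j - 1) choose (m - 2))"
    unfolding alpha_def e1 by (simp only: binomial_Suc_Suc)
  have e2: "d + m - j - 1 = Suc (d + m - j - 2)" "d + m - Suc j - 1 = d + m - j - 2" using assms by arith+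
  have b: "beta m d j = beta m d (Suc j) + ((d + m - j - 2) choose (m - 2))"
    unfolding beta_def e1(2) e2 by (simp only: binomial_Suc_Suc add.commute)
  have "(m + j - 1) choose (m - 2) < (d + m - j - 2) choose (m - 2)"
    using assms by (intro choose_top_strict) auto
  then show ?thesis using a b by simp
qed

definition ff :: "nat \<Rightarrow> nat \<Rightarrow> nat \<Rightarrow> nat \<Rightarrow> nat" where
  "ff n m d j = min (alpha m j + beta m d j) (alpha m j + gamma n m j)"

lemma hmax_ff: "hmax n m d i = (if i \<le> d div 2 then ff n m d i else if i \<le> d then ff n m d (d - i) else 0)"
  unfolding hmax_def ff_def Let_def by simp

lemma unimodal_iff:
  "unimodal (hmax n m d) d \<longleftrightarrow> (\<forall>i < d div 2. ff n m d i \<le> ff n m d (Suc i))"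
proof
  assume "unimodal (hmax n m d) d"
  then obtain k where k: "k \<le> d" "\<forall>i<k. hmax n m d i \<le> hmax n m d (Suc i)"
    "\<forall>i. k \<le> i \<and> i < d \<longrightarrow> hmax n m d (Suc i) \<le> hmax n m d i"
    unfolding unimodal_def by blast
  show "\<forall>i < d div 2. ff n m d i \<le> ff n m d (Suc i)"
  proof (intro allI impI)
    fix i assume i: "i < d div 2"
    show "ff n m d i \<le> ff n m d (Suc i)"
    proof (cases "i < k")
      case True
      then show ?thesis using k(2) i hmax_ff[of n m d i] hmax_ff[of n m d "Suc i"] by auto
    next
      case False
      define j where "j = d - Suc i"
      have "k \<le> j" "j < d" using False i unfolding j_def by auto
      then have le: "hmax n m d (Suc j) \<le> hmax n m d j" using k(3) by blast
      have e1: "hmax n m d (Suc j) = ff n m d i"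
      proof -
        have "\<not> Suc j \<le> d div 2" "Suc j \<le> d" "d - Suc j = i" using i unfolding j_def by auto
        then show ?thesis using hmax_ff[of n m d "Suc j"] by simp
      qed
      have e2: "hmax n m d j = ff n m d (Suc i)"
      proof (cases "j \<le> d div 2")
        case True
        then have "j = Suc i" using i unfolding j_def by auto
        then show ?thesis using True hmax_ff[of n m d j] by simp
      next
        case False
        then have "d - j = Suc i" "j \<le> d" using i unfolding j_def by auto
        then show ?thesis using False hmax_ff[of n m d j] by simp
      qed
      show ?thesis using le e1 e2 by simp
    qed
  qed
next
  assume mono: "\<forall>i < d div 2. ff n m d i \<le> ff n m d (Suc i)"
  show "unimodal (hmax n m d) d"
    unfolding unimodal_def
  proof (intro exI[of _ "d div 2"] conjI allI impI)
    show "d div 2 \<le> d" by simp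
  next
    fix i assume i: "i < d div 2"
    then show "hmax n m d i \<le> hmax n m d (Suc i)"
      using mono hmax_ff[of n m d i] hmax_ff[of n m d "Suc i"] by auto
  next
    fix i assume i: "d div 2 \<le> i \<and> i < d"
    show "hmax n m d (Suc i) \<le> hmax n m d i"
    proof (cases "i = d div 2")
      case True
      then have h1: "hmax n m d i = ff n m d (d div 2)" using hmax_ff[of n m d i] by simp
      have h2: "hmax n m d (Suc i) = ff n m d (d - Suc i)"
        using True i hmax_ff[of n m d "Suc i"] by auto
      show ?thesis
      proof (cases "d - Suc i = d div 2")
        case True then show ?thesis using h1 h2 by simp
      next
        case False
        then have "d - Suc i < d div 2" "Suc (d - Suc i) = d div 2" using True i by auto
        then show ?thesis using h1 h2 mono by metis
      qed
    next
      case False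
      then have h1: "hmax n m d i = ff n m d (d - i)" using i hmax_ff[of n m d i] by auto
      have h2: "hmax n m d (Suc i) = ff n m d (d - Suc i)"
        using False i hmax_ff[of n m d "Suc i"] by auto
      have "d - Suc i < d div 2" "Suc (d - Suc i) = d - i" using False i by auto
      then show ?thesis using h1 h2 mono by metis
    qed
  qed
qed

theorem theorem3p5:
  fixes n m d :: nat
  assumes "3 \<le> m" and "m \<le> n"
    and "n + 1 \<le> (d + m - 2) choose (m - 1)"
  shows "unimodal (hmax n m d) d \<longleftrightarrow>
           (gamma n m (d div 2 - 1) < beta m d (d div 2 - 1) \<and>
            alpha m (d div 2 - 1) + gamma n m (d div 2 - 1)
              \<le> alpha m (d div 2) + beta m d (d div 2))"
proof -
  define s where "s = d div 2"
  let ?A = "alpha m" and ?B = "beta m d" and ?G = "gamma n m"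
  have m1: "1 \<le> m" and m2: "2 \<le> m" using assms by auto
  have "(\<forall>i < s. ff n m d i \<le> ff n m d (Suc i)) \<longleftrightarrow>
        (?G (s - 1) < ?B (s - 1) \<and> ?A (s - 1) + ?G (s - 1) \<le> ?A s + ?B s)"
  proof
    assume mono: "\<forall>i < s. ff n m d i \<le> ff n m d (Suc i)"
    show "?G (s - 1) < ?B (s - 1) \<and> ?A (s - 1) + ?G (s - 1) \<le> ?A s + ?B s"
    proof (cases "s = 0")
      case True
      then show ?thesis using gamma0[OF m2, of n] beta0[OF m1, of d] by simp
    next
      case False
      then obtain t where t: "s = Suc t" by (cases s) auto
      have c1: "?G t < ?B t"
      proof (rule ccontr)
        assume "\<not> ?G t < ?B t"
        then have g: "?B t \<le> ?G t" by simp
        have "?B (Suc t) \<le> ?G (Suc t)"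
          using g gamma_mono[of t "Suc t" n m] beta_anti[of t "Suc t" m d] by simp
        then have "ff n m d (Suc t) = ?A (Suc t) + ?B (Suc t)" "ff n m d t = ?A t + ?B t"
          using g unfolding ff_def by auto
        moreover have "?A (Suc t) + ?B (Suc t) < ?A t + ?B t"
          using ab_strict[OF assms(1)] t s_def by simp
        moreover have "ff n m d t \<le> ff n m d (Suc t)" using mono t by simp
        ultimately show False by simp
      qed
      then have "ff n m d t = ?A t + ?G t" unfolding ff_def by simp
      then have "?A t + ?G t \<le> ff n m d (Suc t)" using mono[rule_format, of t] t by simp
      then have "?A t + ?G t \<le> ?A (Suc t) + ?B (Suc t)" unfolding ff_def by simp
      then show ?thesis using c1 t by simp
    qed
  next
    assume c: "?G (s - 1) < ?B (s - 1) \<and> ?A (s - 1) + ?G (s - 1) \<le> ?A s + ?B s"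
    show "\<forall>i < s. ff n m d i \<le> ff n m d (Suc i)"
    proof (intro allI impI)
      fix i assume i: "i < s"
      have gi: "?G i < ?B i"
        proof -
        have "i \<le> s - 1" using i by simp
        then show ?thesis using c gamma_mono[of i "s - 1" n m] beta_anti[of i "s - 1" m d] by linarith
      qed
      then have fi: "ff n m d i = ?A i + ?G i" unfolding ff_def by simp
      show "ff n m d i \<le> ff n m d (Suc i)"
      proof (cases "Suc i < s")
        case True
        have "?G (Suc i) < ?B (Suc i)"
          proof -
          have "Suc i \<le> s - 1" using True by simp
          then show ?thesis using c gamma_mono[of "Suc i" "s - 1" n m] beta_anti[of "Suc i" "s - 1" m d] by linarith
        qed
        then have "ff n m d (Suc i) = ?A (Suc i) + ?G (Suc i)" unfolding ff_def by simp
        then show ?thesis using fi ag_mono[of m i n] by simp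
      next
        case False
        then have "i = s - 1" "Suc i = s" using i by auto
        then show ?thesis using fi c ag_mono[of m i n] unfolding ff_def by simp
      qed
    qed
  qed
  then show ?thesis using unimodal_iff[of n m d] s_def by simp
qed

end
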